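(* Let $R_0>0$, $T>0$, $\lambda_n=(n\pi/R_0)^2$ for $n\ge1$, let $a:[0,T]\to\mathbb{R}$ satisfy $0<a_0\le a(t)\le a_1$, and let $B^H$ be a fractional Brownian motion with Hurst index $H\in(0,1)$. If $h\in L^\infty(0,T)$ is nonnegative and its support has positive measure, then there is a constant $C>0$ independent of $n$ such that for all $n\ge1$ $$\Big|\int_0^T h(\tau)e^{-\lambda_n\int_\tau^T a(s)ds}\,d\tau\Big|\le \frac{C}{\lambda_n},\qquad \mathbb{E}\Big[\Big(\int_0^T e^{-\lambda_n\int_\tau^T a(s)ds}\,dB^H(\tau)\Big)^2\Big]\le\frac{C}{\lambda_n^{p}},$$ where $p=\min\{2H,1\}$.
   Context: A fractional Brownian motion $B^H$ is a centered Gaussian process with $B^H(0)=0$ and covariance $\mathbb{E}[B^H(t)B^H(s)]=\frac12(t^{2H}+s^{2H}-|t-s|^{2H})$; the stochastic integral of a deterministic integrand is the Wiener integral with respect to $B^H$. (These quantities are the factors relating $f_n,g_n^2$ to $\mathbb{E}(u_n(T))$ and $\mathbb{V}(u_n(T))$ for the final-time Fourier coefficients of the solution of $u_t=a(t)[u_{rr}+\frac2r u_r]+f(r)h(t)+g(r)\dot B^H(t)$ on a ball of radius $R_0$; their decay expresses ill-posedness of recovering $f$ and $|g|$.) *)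

theory Defs
  imports "HOL-Probability.Probability"
begin

definition eigval :: "real \<Rightarrow> nat \<Rightarrow> real" where
  "eigval R0 n = (real n * pi / R0) ^ 2"

definition fbm_cov :: "real \<Rightarrow> real \<Rightarrow> real \<Rightarrow> real" where
  "fbm_cov H t s = (\<bar>t\<bar> powr (2*H) + \<bar>s\<bar> powr (2*H) - \<bar>t - s\<bar> powr (2*H)) / 2"

text \<open>Gaussianity: every finite linear combination is a centered normal variable
  (degenerate, i.e. a.e. zero, if its variance vanishes).\<close>
definition fBm :: "'a measure \<Rightarrow> real \<Rightarrow> (real \<Rightarrow> 'a \<Rightarrow> real) \<Rightarrow> bool" where
  "fBm M H B \<longleftrightarrow>
     prob_space M \<and>
     (\<forall>t\<ge>0. B t \<in> borel_measurable M) \<and>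
     (\<forall>t\<ge>0. integrable M (\<lambda>\<omega>. (B t \<omega>)\<^sup>2)) \<and>
     (\<forall>\<omega>\<in>space M. B 0 \<omega> = 0) \<and>
     (\<forall>t\<ge>0. (\<integral>\<omega>. B t \<omega> \<partial>M) = 0) \<and>
     (\<forall>t\<ge>0. \<forall>s\<ge>0. (\<integral>\<omega>. B t \<omega> * B s \<omega> \<partial>M) = fbm_cov H t s) \<and>
     (\<forall>cs ts. length cs = length ts \<longrightarrow> (\<forall>t\<in>set ts. t \<ge> 0) \<longrightarrow>
        (let X = (\<lambda>\<omega>. \<Sum>i<length ts. cs ! i * B (ts ! i) \<omega>);
             v = (\<Sum>i<length ts. \<Sum>j<length ts. cs ! i * cs ! j * fbm_cov H (ts ! i) (ts ! j))
         in (v = 0 \<longrightarrow> (AE \<omega> in M. X \<omega> = 0)) \<and>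
            (v > 0 \<longrightarrow> distributed M lborel X (\<lambda>x. ennreal (normal_density 0 (sqrt v) x)))))"

definition riemann_sum :: "(real \<Rightarrow> 'a \<Rightarrow> real) \<Rightarrow> (real \<Rightarrow> real) \<Rightarrow> real \<Rightarrow> nat \<Rightarrow> 'a \<Rightarrow> real" where
  "riemann_sum B f T k \<omega> =
     (\<Sum>i<k. f (T * real i / real k) * (B (T * real (Suc i) / real k) \<omega> - B (T * real i / real k) \<omega>))"

definition is_wiener_integral ::
  "'a measure \<Rightarrow> (real \<Rightarrow> 'a \<Rightarrow> real) \<Rightarrow> (real \<Rightarrow> real) \<Rightarrow> real \<Rightarrow> ('a \<Rightarrow> real) \<Rightarrow> bool" where
  "is_wiener_integral M B f T X \<longleftrightarrow>
     X \<in> borel_measurable M \<and> integrable M (\<lambda>\<omega>. (X \<omega>)\<^sup>2) \<and>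
     (\<forall>k. integrable M (\<lambda>\<omega>. (riemann_sum B f T k \<omega> - X \<omega>)\<^sup>2)) \<and>
     ((\<lambda>k. \<integral>\<omega>. (riemann_sum B f T k \<omega> - X \<omega>)\<^sup>2 \<partial>M) \<longlonglongrightarrow> 0)"

end

theory Submission
  imports Defs
begin


lemma L2_complete:
  fixes S :: "nat \<Rightarrow> 'a \<Rightarrow> real" and \<delta> :: "nat \<Rightarrow> real" and M :: "'a measure"
  assumes meas: "\<And>k. S k \<in> borel_measurable M"
    and cauchy: "\<And>a b. a \<ge> 1 \<Longrightarrow> b \<ge> 1 \<Longrightarrow> integrable M (\<lambda>\<omega>. (S a \<omega> - S b \<omega>)\<^sup>2) \<and>
          (\<integral>\<omega>. (S a \<omega> - S b \<omega>)\<^sup>2 \<partial>M) \<le> \<delta> a + \<delta> b"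
    and dlim: "\<delta> \<longlonglongrightarrow> 0"
  shows "\<exists>X. X \<in> borel_measurable M \<and> (\<forall>k\<ge>1. integrable M (\<lambda>\<omega>. (S k \<omega> - X \<omega>)\<^sup>2) \<and>
            (\<integral>\<omega>. (S k \<omega> - X \<omega>)\<^sup>2 \<partial>M) \<le> \<delta> k)"
proof -
  have "\<forall>j. \<exists>m. m \<ge> 1 \<and> \<bar>\<delta> m\<bar> \<le> (1/8)^j"
  proof
    fix j :: nat
    have "(1/8::real)^j > 0" by simp
    from LIMSEQ_D[OF dlim this] obtain N where "\<And>k. k \<ge> N \<Longrightarrow> norm (\<delta> k - 0) < (1/8)^j" by blast
    then show "\<exists>m. m \<ge> 1 \<and> \<bar>\<delta> m\<bar> \<le> (1/8)^j"
      by (intro exI[of _ "max 1 N"]) (simp, smt (verit) max.cobounded2)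
  qed
  then obtain n where n1: "\<And>j. n j \<ge> 1" and nd: "\<And>j. \<bar>\<delta> (n j)\<bar> \<le> (1/8)^j"
    by metis
  have dpos: "\<And>k. k \<ge> 1 \<Longrightarrow> \<delta> k \<ge> 0"
  proof -
    fix k :: nat assume "k \<ge> 1"
    from cauchy[OF this this] show "\<delta> k \<ge> 0" by simp
  qed
  define d where "d j \<omega> = S (n (Suc j)) \<omega> - S (n j) \<omega>" for j \<omega>
  have dmeas[measurable]: "\<And>j. d j \<in> borel_measurable M" unfolding d_def using meas by measurable
  have dint: "\<And>j. integrable M (\<lambda>\<omega>. (d j \<omega>)\<^sup>2)" unfolding d_def using cauchy n1 by blast
  have dbound: "\<And>j. (\<integral>\<omega>. (d j \<omega>)\<^sup>2 \<partial>M) \<le> 2 * (1/8)^j"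
  proof -
    fix j
    have "(\<integral>\<omega>. (d j \<omega>)\<^sup>2 \<partial>M) \<le> \<delta> (n (Suc j)) + \<delta> (n j)" unfolding d_def using cauchy n1 by blast
    also have "\<dots> \<le> (1/8)^(Suc j) + (1/8)^j" using nd[of j] nd[of "Suc j"] by linarith
    also have "\<dots> \<le> 2 * (1/8)^j" by simp
    finally show "(\<integral>\<omega>. (d j \<omega>)\<^sup>2 \<partial>M) \<le> 2 * (1/8)^j" .
  qed
  define G where "G \<omega> = (\<Sum>j. ennreal (2^j * (d j \<omega>)\<^sup>2))" for \<omega>
  have Gmeas: "G \<in> borel_measurable M" unfolding G_def by measurable
  have "(\<integral>\<^sup>+\<omega>. G \<omega> \<partial>M) = (\<Sum>j. \<integral>\<^sup>+\<omega>. ennreal (2^j * (d j \<omega>)\<^sup>2) \<partial>M)"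
    unfolding G_def by (rule nn_integral_suminf) measurable
  also have "\<dots> = (\<Sum>j. ennreal (2^j * (\<integral>\<omega>. (d j \<omega>)\<^sup>2 \<partial>M)))"
    by (intro suminf_cong, subst nn_integral_eq_integral) (use dint in auto)
  also have "\<dots> \<le> (\<Sum>j. ennreal (2 * (1/4)^j))"
  proof (intro suminf_le summableI)
    fix j
    have "2^j * (\<integral>\<omega>. (d j \<omega>)\<^sup>2 \<partial>M) \<le> (2::real)^j * (2 * (1/8)^j)"
      using dbound[of j] by (intro mult_left_mono) auto
    also have "\<dots> = 2 * (1/4)^j" by (simp add: power_divide field_simps flip: power_mult_distrib)
    finally show "ennreal (2^j * (\<integral>\<omega>. (d j \<omega>)\<^sup>2 \<partial>M)) \<le> ennreal (2 * (1/4)^j)"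
      by (intro ennreal_leI)
  qed
  also have "\<dots> = ennreal (\<Sum>j. 2 * (1/4::real)^j)"
    by (intro suminf_ennreal2) (auto intro!: summable_mult summable_geometric)
  finally have "(\<integral>\<^sup>+\<omega>. G \<omega> \<partial>M) \<noteq> \<infinity>" by (auto simp: top_unique)
  from nn_integral_PInf_AE[OF Gmeas this] have AEG: "AE \<omega> in M. G \<omega> \<noteq> \<infinity>" .
  have conv: "AE \<omega> in M. convergent (\<lambda>j. S (n j) \<omega>)"
    using AEG
  proof eventually_elim
    case (elim \<omega>)
    have s1: "summable (\<lambda>j. 2^j * (d j \<omega>)\<^sup>2)"
      by (rule summable_suminf_not_top) (use elim in \<open>auto simp: G_def\<close>)
    have s2: "summable (\<lambda>j. (1/2::real)^j + 2^j * (d j \<omega>)\<^sup>2)"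
      by (intro summable_add s1 summable_geometric) auto
    have "summable (\<lambda>j. d j \<omega>)"
    proof (rule summable_comparison_test[OF _ s2], intro exI allI impI)
      fix j :: nat
      show "norm (d j \<omega>) \<le> (1/2)^j + 2^j * (d j \<omega>)\<^sup>2"
      proof (cases "\<bar>d j \<omega>\<bar> \<le> (1/2)^j")
        case True
        have "0 \<le> (2::real)^j * (d j \<omega>)\<^sup>2" by simp
        with True show ?thesis by (simp only: real_norm_def)
      next
        case False
        then have one: "1 \<le> 2^j * \<bar>d j \<omega>\<bar>" by (simp add: power_divide field_simps)
        have "\<bar>d j \<omega>\<bar> \<le> (2^j * \<bar>d j \<omega>\<bar>) * \<bar>d j \<omega>\<bar>"
          using mult_right_mono[OF one abs_ge_zero[of "d j \<omega>"]] by simp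
        also have "\<dots> = 2^j * (d j \<omega>)\<^sup>2" by (simp add: power2_eq_square)
        finally have "\<bar>d j \<omega>\<bar> \<le> 2^j * (d j \<omega>)\<^sup>2" .
        moreover have "(0::real) \<le> (1/2)^j" by simp
        ultimately show ?thesis by (simp only: real_norm_def)
      qed
    qed
    then have "convergent (\<lambda>j. \<Sum>i<j. d i \<omega>)"
      using summable_LIMSEQ convergent_def by blast
    then have "convergent (\<lambda>j. S (n 0) \<omega> + (\<Sum>i<j. d i \<omega>))"
      by (intro convergent_add convergent_const)
    moreover have "\<And>j. S (n 0) \<omega> + (\<Sum>i<j. d i \<omega>) = S (n j) \<omega>"
      unfolding d_def by (subst sum_lessThan_telescope) simp
    ultimately show ?case by simp
  qed
  define X where "X \<omega> = lim (\<lambda>j. S (n j) \<omega>)" for \<omega>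
  have Xmeas[measurable]: "X \<in> borel_measurable M" unfolding X_def using meas by measurable
  have Xlim: "AE \<omega> in M. (\<lambda>j. S (n j) \<omega>) \<longlonglongrightarrow> X \<omega>"
    using conv by eventually_elim (simp add: X_def convergent_LIMSEQ_iff)
  have dn: "(\<lambda>j. \<delta> (n j)) \<longlonglongrightarrow> 0"
  proof (rule Lim_null_comparison[OF _ LIMSEQ_power_zero[of "1/8::real"]])
    show "\<forall>\<^sub>F j in sequentially. norm (\<delta> (n j)) \<le> (1/8)^j" using nd by simp
  qed simp
  have main: "integrable M (\<lambda>\<omega>. (S k \<omega> - X \<omega>)\<^sup>2) \<and> (\<integral>\<omega>. (S k \<omega> - X \<omega>)\<^sup>2 \<partial>M) \<le> \<delta> k"
    if k: "k \<ge> 1" for k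
  proof -
    have "(\<integral>\<^sup>+\<omega>. ennreal ((S k \<omega> - X \<omega>)\<^sup>2) \<partial>M) =
          (\<integral>\<^sup>+\<omega>. liminf (\<lambda>j. ennreal ((S k \<omega> - S (n j) \<omega>)\<^sup>2)) \<partial>M)"
      using Xlim
    proof (intro nn_integral_cong_AE, eventually_elim)
      case (elim \<omega>)
      have "(\<lambda>j. ennreal ((S k \<omega> - S (n j) \<omega>)\<^sup>2)) \<longlonglongrightarrow> ennreal ((S k \<omega> - X \<omega>)\<^sup>2)"
        by (intro tendsto_intros elim)
      from lim_imp_Liminf[OF sequentially_bot this] show ?case by simp
    qed
    also have "\<dots> \<le> liminf (\<lambda>j. \<integral>\<^sup>+\<omega>. ennreal ((S k \<omega> - S (n j) \<omega>)\<^sup>2) \<partial>M)"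
      by (rule nn_integral_liminf) (use meas in measurable)
    also have "\<dots> \<le> liminf (\<lambda>j. ennreal (\<delta> k + \<delta> (n j)))"
    proof (intro Liminf_mono always_eventually allI)
      fix j
      have "(\<integral>\<^sup>+\<omega>. ennreal ((S k \<omega> - S (n j) \<omega>)\<^sup>2) \<partial>M) = ennreal (\<integral>\<omega>. (S k \<omega> - S (n j) \<omega>)\<^sup>2 \<partial>M)"
        using cauchy[OF k n1[of j]] by (intro nn_integral_eq_integral) auto
      also have "\<dots> \<le> ennreal (\<delta> k + \<delta> (n j))"
        using cauchy[OF k n1[of j]] by (intro ennreal_leI) auto
      finally show "(\<integral>\<^sup>+\<omega>. ennreal ((S k \<omega> - S (n j) \<omega>)\<^sup>2) \<partial>M) \<le> ennreal (\<delta> k + \<delta> (n j))" .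
    qed
    also have "\<dots> = ennreal (\<delta> k)"
    proof -
      have "(\<lambda>j. ennreal (\<delta> k + \<delta> (n j))) \<longlonglongrightarrow> ennreal (\<delta> k + 0)"
        by (intro tendsto_intros dn)
      from lim_imp_Liminf[OF sequentially_bot this] show ?thesis by simp
    qed
    finally have le: "(\<integral>\<^sup>+\<omega>. ennreal ((S k \<omega> - X \<omega>)\<^sup>2) \<partial>M) \<le> ennreal (\<delta> k)" .
    have int: "integrable M (\<lambda>\<omega>. (S k \<omega> - X \<omega>)\<^sup>2)"
      by (rule integrableI_nonneg) (use le meas in \<open>auto intro: le_less_trans\<close>)
    have "ennreal (\<integral>\<omega>. (S k \<omega> - X \<omega>)\<^sup>2 \<partial>M) \<le> ennreal (\<delta> k)"
      using le by (subst (asm) nn_integral_eq_integral[OF int]) auto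
    then have "(\<integral>\<omega>. (S k \<omega> - X \<omega>)\<^sup>2 \<partial>M) \<le> \<delta> k" using dpos[OF k] by simp
    with int show ?thesis by blast
  qed
  show ?thesis using Xmeas main by blast
qed



lemma fbm_cov_same: "fbm_cov H t t = \<bar>t\<bar> powr (2*H)"
  unfolding fbm_cov_def by simp

lemma sq_integrable_prod:
  fixes X Y :: "'a \<Rightarrow> real"
  assumes "X \<in> borel_measurable M" "Y \<in> borel_measurable M"
    "integrable M (\<lambda>\<omega>. (X \<omega>)\<^sup>2)" "integrable M (\<lambda>\<omega>. (Y \<omega>)\<^sup>2)"
  shows "integrable M (\<lambda>\<omega>. X \<omega> * Y \<omega>)"
proof (rule Bochner_Integration.integrable_bound[of _ "\<lambda>\<omega>. (X \<omega>)\<^sup>2 + (Y \<omega>)\<^sup>2"])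
  show "integrable M (\<lambda>\<omega>. (X \<omega>)\<^sup>2 + (Y \<omega>)\<^sup>2)" using assms by auto
  show "(\<lambda>\<omega>. X \<omega> * Y \<omega>) \<in> borel_measurable M" using assms by measurable
  show "AE \<omega> in M. norm (X \<omega> * Y \<omega>) \<le> norm ((X \<omega>)\<^sup>2 + (Y \<omega>)\<^sup>2)"
  proof (intro AE_I2)
    fix \<omega>
    have h2: "2 * (\<bar>X \<omega>\<bar> * \<bar>Y \<omega>\<bar>) \<le> (X \<omega>)\<^sup>2 + (Y \<omega>)\<^sup>2"
    proof -
      have e: "(\<bar>X \<omega>\<bar> - \<bar>Y \<omega>\<bar>)\<^sup>2 = (X \<omega>)\<^sup>2 - 2 * (\<bar>X \<omega>\<bar> * \<bar>Y \<omega>\<bar>) + (Y \<omega>)\<^sup>2"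
        by (simp add: power2_diff)
      have "0 \<le> (\<bar>X \<omega>\<bar> - \<bar>Y \<omega>\<bar>)\<^sup>2" by simp
      with e show ?thesis by linarith
    qed
    have h0: "0 \<le> \<bar>X \<omega>\<bar> * \<bar>Y \<omega>\<bar>" by simp
    have "\<bar>X \<omega> * Y \<omega>\<bar> \<le> (X \<omega>)\<^sup>2 + (Y \<omega>)\<^sup>2" using h2 h0 by (simp only: abs_mult)
    then show "norm (X \<omega> * Y \<omega>) \<le> norm ((X \<omega>)\<^sup>2 + (Y \<omega>)\<^sup>2)" by simp
  qed
qed

lemma fbm_incr:
  assumes fbm: "fBm M H B" and p: "p \<ge> 0" and q: "q \<ge> 0"
  shows "integrable M (\<lambda>\<omega>. (B q \<omega> - B p \<omega>)\<^sup>2) \<and>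
         (\<integral>\<omega>. (B q \<omega> - B p \<omega>)\<^sup>2 \<partial>M) = \<bar>q - p\<bar> powr (2*H)"
proof -
  have mq[measurable]: "B q \<in> borel_measurable M" and mp[measurable]: "B p \<in> borel_measurable M"
    using fbm p q unfolding fBm_def by auto
  have iq: "integrable M (\<lambda>\<omega>. (B q \<omega>)\<^sup>2)" and ip: "integrable M (\<lambda>\<omega>. (B p \<omega>)\<^sup>2)"
    using fbm p q unfolding fBm_def by auto
  have ipq: "integrable M (\<lambda>\<omega>. B q \<omega> * B p \<omega>)"
    by (rule sq_integrable_prod) (use iq ip in auto)
  have cqq: "(\<integral>\<omega>. B q \<omega> * B q \<omega> \<partial>M) = fbm_cov H q q"
   and cpp: "(\<integral>\<omega>. B p \<omega> * B p \<omega> \<partial>M) = fbm_cov H p p"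
   and cqp: "(\<integral>\<omega>. B q \<omega> * B p \<omega> \<partial>M) = fbm_cov H q p"
    using fbm p q unfolding fBm_def by auto
  have eq: "\<And>\<omega>. (B q \<omega> - B p \<omega>)\<^sup>2 = B q \<omega> * B q \<omega> + B p \<omega> * B p \<omega> - 2 * (B q \<omega> * B p \<omega>)"
    by (simp add: power2_eq_square algebra_simps)
  have iqq: "integrable M (\<lambda>\<omega>. B q \<omega> * B q \<omega>)" using iq by (simp add: power2_eq_square)
  have ipp: "integrable M (\<lambda>\<omega>. B p \<omega> * B p \<omega>)" using ip by (simp add: power2_eq_square)
  have int: "integrable M (\<lambda>\<omega>. (B q \<omega> - B p \<omega>)\<^sup>2)"
    unfolding eq using iqq ipp ipq by auto
  have "(\<integral>\<omega>. (B q \<omega> - B p \<omega>)\<^sup>2 \<partial>M) = fbm_cov H q q + fbm_cov H p p - 2 * fbm_cov H q p"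
    unfolding eq using iqq ipp ipq cqq cpp cqp by simp
  also have "\<dots> = \<bar>q - p\<bar> powr (2*H)"
    unfolding fbm_cov_def using p q by (simp add: field_simps)
  finally show ?thesis using int by blast
qed

lemma weighted_cs:
  fixes w Y :: "'j \<Rightarrow> real"
  assumes "\<And>j. j \<in> J \<Longrightarrow> w j \<ge> 0"
  shows "(\<Sum>j\<in>J. w j * Y j)\<^sup>2 \<le> (\<Sum>j\<in>J. w j) * (\<Sum>j\<in>J. w j * (Y j)\<^sup>2)"
proof -
  have "(\<Sum>j\<in>J. w j * Y j) = (\<Sum>j\<in>J. sqrt (w j) * (sqrt (w j) * Y j))"
    using assms by (intro sum.cong) (auto simp flip: mult.assoc)
  also have "(\<dots>)\<^sup>2 \<le> (\<Sum>j\<in>J. (sqrt (w j))\<^sup>2) * (\<Sum>j\<in>J. (sqrt (w j) * Y j)\<^sup>2)"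
    by (rule Cauchy_Schwarz_ineq_sum)
  also have "\<dots> = (\<Sum>j\<in>J. w j) * (\<Sum>j\<in>J. w j * (Y j)\<^sup>2)"
    using assms by (auto intro!: arg_cong2[where f="(*)"] sum.cong simp: power_mult_distrib)
  finally show ?thesis .
qed

lemma lemmaA:
  fixes w p q :: "'j \<Rightarrow> real"
  assumes fbm: "fBm M H B" and J: "finite J"
    and wpq: "\<And>j. j \<in> J \<Longrightarrow> w j \<ge> 0 \<and> p j \<ge> 0 \<and> q j \<ge> 0"
  shows "integrable M (\<lambda>\<omega>. (\<Sum>j\<in>J. w j * (B (q j) \<omega> - B (p j) \<omega>))\<^sup>2) \<and>
         (\<integral>\<omega>. (\<Sum>j\<in>J. w j * (B (q j) \<omega> - B (p j) \<omega>))\<^sup>2 \<partial>M)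
            \<le> (\<Sum>j\<in>J. w j) * (\<Sum>j\<in>J. w j * \<bar>q j - p j\<bar> powr (2*H))"
proof -
  have meas: "\<And>t. t \<ge> 0 \<Longrightarrow> B t \<in> borel_measurable M" using fbm unfolding fBm_def by auto
  have incr: "\<And>j. j \<in> J \<Longrightarrow> integrable M (\<lambda>\<omega>. (B (q j) \<omega> - B (p j) \<omega>)\<^sup>2) \<and>
         (\<integral>\<omega>. (B (q j) \<omega> - B (p j) \<omega>)\<^sup>2 \<partial>M) = \<bar>q j - p j\<bar> powr (2*H)"
    using fbm_incr[OF fbm] wpq by blast
  define U where "U \<omega> = (\<Sum>j\<in>J. w j) * (\<Sum>j\<in>J. w j * (B (q j) \<omega> - B (p j) \<omega>)\<^sup>2)" for \<omega>
  have Uint: "integrable M U"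
    unfolding U_def using incr by (intro integrable_mult_right integrable_sum integrable_mult_right) auto
  have Umeas: "(\<lambda>\<omega>. (\<Sum>j\<in>J. w j * (B (q j) \<omega> - B (p j) \<omega>))\<^sup>2) \<in> borel_measurable M"
    using meas wpq by (intro borel_measurable_power borel_measurable_sum borel_measurable_times borel_measurable_diff) auto
  have pw: "\<And>\<omega>. (\<Sum>j\<in>J. w j * (B (q j) \<omega> - B (p j) \<omega>))\<^sup>2 \<le> U \<omega>"
    unfolding U_def by (rule weighted_cs) (use wpq in auto)
  have int: "integrable M (\<lambda>\<omega>. (\<Sum>j\<in>J. w j * (B (q j) \<omega> - B (p j) \<omega>))\<^sup>2)"
    by (rule Bochner_Integration.integrable_bound[OF Uint Umeas]) (rule AE_I2, simp, rule order_trans[OF pw abs_ge_self])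
  have "(\<integral>\<omega>. (\<Sum>j\<in>J. w j * (B (q j) \<omega> - B (p j) \<omega>))\<^sup>2 \<partial>M) \<le> (\<integral>\<omega>. U \<omega> \<partial>M)"
    by (rule integral_mono[OF int Uint pw])
  also have "\<dots> = (\<Sum>j\<in>J. w j) * (\<Sum>j\<in>J. w j * \<bar>q j - p j\<bar> powr (2*H))"
  proof -
    have "(\<integral>\<omega>. U \<omega> \<partial>M) = (\<Sum>j\<in>J. w j) * (\<integral>\<omega>. (\<Sum>j\<in>J. w j * (B (q j) \<omega> - B (p j) \<omega>)\<^sup>2) \<partial>M)"
      unfolding U_def by (rule integral_mult_right_zero)
    also have "(\<integral>\<omega>. (\<Sum>j\<in>J. w j * (B (q j) \<omega> - B (p j) \<omega>)\<^sup>2) \<partial>M) = (\<Sum>j\<in>J. (\<integral>\<omega>. w j * (B (q j) \<omega> - B (p j) \<omega>)\<^sup>2 \<partial>M))"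
      using incr by (intro Bochner_Integration.integral_sum) auto
    also have "\<dots> = (\<Sum>j\<in>J. w j * \<bar>q j - p j\<bar> powr (2*H))"
      using incr by (intro sum.cong refl) (simp add: integral_mult_right_zero)
    finally show ?thesis .
  qed
  finally show ?thesis using int by blast
qed



lemma sbp:
  fixes F G :: "nat \<Rightarrow> real"
  shows "(\<Sum>i<k. F i * (G (Suc i) - G i)) = F 0 * (G k - G 0) + (\<Sum>i<k. (F (Suc i) - F i) * (G k - G (Suc i)))"
proof (induction k)
  case 0 then show ?case by simp
next
  case (Suc k)
  have t: "(\<Sum>i<k. (F (Suc i) - F i)) = F k - F 0" by (rule sum_lessThan_telescope)
  have "(\<Sum>i<k. (F (Suc i) - F i) * (G (Suc k) - G (Suc i))) =
        (\<Sum>i<k. (F (Suc i) - F i) * (G k - G (Suc i))) + (\<Sum>i<k. (F (Suc i) - F i)) * (G (Suc k) - G k)"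
    by (simp add: sum_distrib_right flip: sum.distrib) (simp add: algebra_simps)
  then show ?case using Suc t by (simp add: algebra_simps)
qed

definition grid :: "real \<Rightarrow> nat \<Rightarrow> nat \<Rightarrow> real" where
  "grid T k i = T * real i / real k"

lemma grid_nonneg: "T \<ge> 0 \<Longrightarrow> grid T k i \<ge> 0"
  unfolding grid_def by simp

lemma grid_le: "T \<ge> 0 \<Longrightarrow> i \<le> k \<Longrightarrow> grid T k i \<le> T"
  unfolding grid_def by (cases "k = 0") (auto simp: field_simps mult_left_mono)

lemma grid_last: "k \<ge> 1 \<Longrightarrow> grid T k k = T"
  unfolding grid_def by simp

lemma grid_mult: "m \<ge> 1 \<Longrightarrow> grid T k i = grid T (k*m) (i*m)"
  unfolding grid_def by (simp add: field_simps)

lemma riemann_rep: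
  assumes fbm: "fBm M H B" and k: "k \<ge> 1" and \<omega>: "\<omega> \<in> space M"
  shows "riemann_sum B f T k \<omega> = f 0 * B T \<omega> +
     (\<Sum>i<k. (f (grid T k (Suc i)) - f (grid T k i)) * (B T \<omega> - B (grid T k (Suc i)) \<omega>))"
proof -
  have B0: "B 0 \<omega> = 0" using fbm \<omega> unfolding fBm_def by auto
  have "riemann_sum B f T k \<omega> = (\<Sum>i<k. f (grid T k i) * (B (grid T k (Suc i)) \<omega> - B (grid T k i) \<omega>))"
    unfolding riemann_sum_def grid_def by simp
  also have "\<dots> = f (grid T k 0) * (B (grid T k k) \<omega> - B (grid T k 0) \<omega>) +
      (\<Sum>i<k. (f (grid T k (Suc i)) - f (grid T k i)) * (B (grid T k k) \<omega> - B (grid T k (Suc i)) \<omega>))"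
    by (rule sbp[where F="\<lambda>i. f (grid T k i)" and G="\<lambda>i. B (grid T k i) \<omega>"])
  also have "\<dots> = f 0 * B T \<omega> +
     (\<Sum>i<k. (f (grid T k (Suc i)) - f (grid T k i)) * (B T \<omega> - B (grid T k (Suc i)) \<omega>))"
    using grid_last[OF k] B0 by (simp add: grid_def)
  finally show ?thesis .
qed

lemma sum_split_mult:
  fixes g :: "nat \<Rightarrow> real"
  shows "(\<Sum>j<k*m. g j) = (\<Sum>i<k. \<Sum>r<m. g (i*m + r))"
proof (induction k)
  case 0 then show ?case by simp
next
  case (Suc k)
  have e: "{..<Suc k * m} = {..<k*m} \<union> {k*m..<k*m+m}" by auto
  have "(\<Sum>j<Suc k*m. g j) = (\<Sum>j<k*m. g j) + (\<Sum>j\<in>{k*m..<k*m+m}. g j)"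
    unfolding e by (rule sum.union_disjoint) auto
  also have "(\<Sum>j\<in>{k*m..<k*m+m}. g j) = (\<Sum>r<m. g (k*m + r))"
    using sum.shift_bounds_nat_ivl[of g 0 "k*m" m] by (simp add: atLeast0LessThan add.commute)
  finally show ?case using Suc by simp
qed

lemma cauchy_step:
  fixes f :: "real \<Rightarrow> real"
  assumes fbm: "fBm M H B" and T: "T > 0" and H: "H > 0"
    and mono: "\<And>x y. 0 \<le> x \<Longrightarrow> x \<le> y \<Longrightarrow> y \<le> T \<Longrightarrow> f x \<le> f y"
    and fT: "f T = 1" and f0: "f 0 \<ge> 0"
    and k: "k \<ge> 1" and m: "m \<ge> 1"
  shows "integrable M (\<lambda>\<omega>. (riemann_sum B f T k \<omega> - riemann_sum B f T (k*m) \<omega>)\<^sup>2) \<and>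
    (\<integral>\<omega>. (riemann_sum B f T k \<omega> - riemann_sum B f T (k*m) \<omega>)\<^sup>2 \<partial>M) \<le> (T / real k) powr (2*H)"
proof -
  have km: "k * m \<ge> 1" using k m by simp
  define u where "u j = grid T (k*m) j" for j
  define w where "w = (\<lambda>(i,r). f (u (i*m+r+1)) - f (u (i*m+r)))"
  define q where "q = (\<lambda>(i::nat,r::nat). u (i*m+r+1))"
  define p where "p = (\<lambda>(i::nat,r::nat). grid T k (Suc i))"
  define J where "J = {..<k} \<times> {..<m}"
  have fin: "finite J" unfolding J_def by simp
  have ugrid: "\<And>i. grid T k i = u (i*m)" unfolding u_def using grid_mult[OF m] by simp
  have tele: "f (grid T k (Suc i)) - f (grid T k i) = (\<Sum>r<m. f (u (i*m+r+1)) - f (u (i*m+r)))" for i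
  proof -
    have "(\<Sum>r<m. f (u (i*m+Suc r)) - f (u (i*m+r))) = f (u (i*m+m)) - f (u (i*m+0))"
      by (rule sum_lessThan_telescope[where f="\<lambda>r. f (u (i*m+r))"])
    then show ?thesis using ugrid[of i] ugrid[of "Suc i"] by (simp add: add.commute)
  qed
  have eq: "riemann_sum B f T k \<omega> - riemann_sum B f T (k*m) \<omega> =
            (\<Sum>j\<in>J. w j * (B (q j) \<omega> - B (p j) \<omega>))" if \<omega>: "\<omega> \<in> space M" for \<omega>
  proof -
    have r1: "riemann_sum B f T k \<omega> = f 0 * B T \<omega> +
       (\<Sum>i<k. \<Sum>r<m. (f (u (i*m+r+1)) - f (u (i*m+r))) * (B T \<omega> - B (grid T k (Suc i)) \<omega>))"
      unfolding riemann_rep[OF fbm k \<omega>] tele by (simp add: sum_distrib_right)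
    have r2: "riemann_sum B f T (k*m) \<omega> = f 0 * B T \<omega> +
       (\<Sum>i<k. \<Sum>r<m. (f (u (i*m+r+1)) - f (u (i*m+r))) * (B T \<omega> - B (u (i*m+r+1)) \<omega>))"
      unfolding riemann_rep[OF fbm km \<omega>] sum_split_mult u_def by simp
    have "(\<Sum>j\<in>J. w j * (B (q j) \<omega> - B (p j) \<omega>)) =
      (\<Sum>(i,r)\<in>{..<k}\<times>{..<m}. (f (u (i*m+r+1)) - f (u (i*m+r))) * (B (u (i*m+r+1)) \<omega> - B (grid T k (Suc i)) \<omega>))"
      unfolding J_def by (intro sum.cong) (auto simp: w_def q_def p_def)
    also have "\<dots> = (\<Sum>i<k. \<Sum>r<m. (f (u (i*m+r+1)) - f (u (i*m+r))) * (B (u (i*m+r+1)) \<omega> - B (grid T k (Suc i)) \<omega>))"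
      by (rule sum.cartesian_product[symmetric])
    also have "\<dots> = (\<Sum>i<k. \<Sum>r<m. (f (u (i*m+r+1)) - f (u (i*m+r))) * (B T \<omega> - B (grid T k (Suc i)) \<omega>)
        - (f (u (i*m+r+1)) - f (u (i*m+r))) * (B T \<omega> - B (u (i*m+r+1)) \<omega>))"
      by (intro sum.cong refl) (simp add: algebra_simps)
    also have "\<dots> = riemann_sum B f T k \<omega> - riemann_sum B f T (k*m) \<omega>"
      unfolding r1 r2 by (simp add: sum_subtractf)
    finally show ?thesis by simp
  qed
  have uin: "\<And>j. j \<le> k*m \<Longrightarrow> 0 \<le> u j \<and> u j \<le> T" unfolding u_def using T
    by (simp add: grid_nonneg grid_le)
  have wpq: "\<And>j. j \<in> J \<Longrightarrow> w j \<ge> 0 \<and> p j \<ge> 0 \<and> q j \<ge> 0"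
  proof -
    fix j assume "j \<in> J"
    then obtain i r where j: "j = (i,r)" "i < k" "r < m" unfolding J_def by auto
    have "i*m + r + 1 \<le> k*m"
    proof -
      have "i*m + r + 1 \<le> i*m + m" using j by simp
      also have "\<dots> = (i+1)*m" by simp
      also have "\<dots> \<le> k*m" using j by (intro mult_right_mono) auto
      finally show ?thesis .
    qed
    then have a: "0 \<le> u (i*m+r) \<and> u (i*m+r+1) \<le> T \<and> 0 \<le> u (i*m+r+1)" using uin by auto
    have "u (i*m+r) \<le> u (i*m+r+1)" unfolding u_def grid_def using T by (simp add: divide_right_mono)
    then have "w j \<ge> 0" using mono a unfolding w_def j by simp
    then show "w j \<ge> 0 \<and> p j \<ge> 0 \<and> q j \<ge> 0" using a T unfolding p_def q_def j
      by (simp add: grid_nonneg)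
  qed
  have wsum: "(\<Sum>j\<in>J. w j) = 1 - f 0"
  proof -
    have "(\<Sum>j\<in>J. w j) = (\<Sum>i<k. \<Sum>r<m. f (u (i*m+r+1)) - f (u (i*m+r)))"
      unfolding J_def w_def by (simp add: sum.cartesian_product)
    also have "\<dots> = (\<Sum>j<k*m. f (u (Suc j)) - f (u j))" unfolding sum_split_mult by simp
    also have "\<dots> = f (u (k*m)) - f (u 0)" by (rule sum_lessThan_telescope)
    also have "\<dots> = 1 - f 0" unfolding u_def using grid_last[OF km] fT by (simp add: grid_def)
    finally show ?thesis .
  qed
  have dist: "\<bar>q j - p j\<bar> powr (2*H) \<le> (T / real k) powr (2*H)" if "j \<in> J" for j
  proof -
    obtain i r where j: "j = (i,r)" "i < k" "r < m" using \<open>j \<in> J\<close> unfolding J_def by auto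
    have "p j = u ((i+1)*m)" unfolding p_def j using ugrid by simp
    have "\<bar>q j - p j\<bar> = T * real ((i+1)*m - (i*m+r+1)) / real (k*m)"
    proof -
      have le: "i*m+r+1 \<le> (i+1)*m" using j by simp
      have "\<bar>q j - p j\<bar> = \<bar>T * real (i*m+r+1) / real (k*m) - T * real ((i+1)*m) / real (k*m)\<bar>"
        unfolding q_def j \<open>p j = u ((i+1)*m)\<close>[unfolded j] u_def grid_def by simp
      also have "\<dots> = T * real ((i+1)*m) / real (k*m) - T * real (i*m+r+1) / real (k*m)"
      proof -
        have "T * real (i*m+r+1) / real (k*m) \<le> T * real ((i+1)*m) / real (k*m)"
          using le T by (intro divide_right_mono mult_left_mono) auto
        then show ?thesis by simp
      qed
      also have "\<dots> = T * (real ((i+1)*m) - real (i*m+r+1)) / real (k*m)"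
        by (simp only: right_diff_distrib diff_divide_distrib)
      also have "\<dots> = T * real ((i+1)*m - (i*m+r+1)) / real (k*m)"
        using le by (simp add: of_nat_diff)
      finally show ?thesis .
    qed
    also have "\<dots> \<le> T * real m / real (k*m)"
    proof -
      have "(i+1)*m - (i*m+r+1) \<le> m" by simp
      then show ?thesis using T by (intro divide_right_mono mult_left_mono) auto
    qed
    also have "\<dots> = T / real k" using m by simp
    finally show ?thesis by (intro powr_mono2) (use H in auto)
  qed
  from lemmaA[OF fbm fin wpq] have A:
    "integrable M (\<lambda>\<omega>. (\<Sum>j\<in>J. w j * (B (q j) \<omega> - B (p j) \<omega>))\<^sup>2)"
    "(\<integral>\<omega>. (\<Sum>j\<in>J. w j * (B (q j) \<omega> - B (p j) \<omega>))\<^sup>2 \<partial>M) \<le> (\<Sum>j\<in>J. w j) * (\<Sum>j\<in>J. w j * \<bar>q j - p j\<bar> powr (2*H))"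
    by auto
  have "(\<Sum>j\<in>J. w j * \<bar>q j - p j\<bar> powr (2*H)) \<le> (\<Sum>j\<in>J. w j * (T / real k) powr (2*H))"
    using wpq dist by (intro sum_mono mult_left_mono) auto
  also have "\<dots> = (1 - f 0) * (T / real k) powr (2*H)" by (simp add: wsum flip: sum_distrib_right)
  finally have s2: "(\<Sum>j\<in>J. w j * \<bar>q j - p j\<bar> powr (2*H)) \<le> (1 - f 0) * (T / real k) powr (2*H)" .
  have f01: "0 \<le> 1 - f 0" "1 - f 0 \<le> 1" using mono[of 0 T] T f0 fT by auto
  have "(\<Sum>j\<in>J. w j) * (\<Sum>j\<in>J. w j * \<bar>q j - p j\<bar> powr (2*H)) \<le> 1 * ((1 - f 0) * (T / real k) powr (2*H))"
    unfolding wsum using s2 f01 by (intro mult_mono) (auto intro: sum_nonneg simp: wpq)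
  also have "\<dots> \<le> (T / real k) powr (2*H)" using f01 by (simp add: mult_left_le_one_le)
  finally have bound: "(\<Sum>j\<in>J. w j) * (\<Sum>j\<in>J. w j * \<bar>q j - p j\<bar> powr (2*H)) \<le> (T / real k) powr (2*H)" .
  have eq2: "\<And>\<omega>. \<omega> \<in> space M \<Longrightarrow> (riemann_sum B f T k \<omega> - riemann_sum B f T (k*m) \<omega>)\<^sup>2 = (\<Sum>j\<in>J. w j * (B (q j) \<omega> - B (p j) \<omega>))\<^sup>2"
    using eq by simp
  have int: "integrable M (\<lambda>\<omega>. (riemann_sum B f T k \<omega> - riemann_sum B f T (k*m) \<omega>)\<^sup>2)"
    using A(1) Bochner_Integration.integrable_cong[OF refl eq2, of M "\<lambda>x. x"] by simp
  have "(\<integral>\<omega>. (riemann_sum B f T k \<omega> - riemann_sum B f T (k*m) \<omega>)\<^sup>2 \<partial>M) =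
        (\<integral>\<omega>. (\<Sum>j\<in>J. w j * (B (q j) \<omega> - B (p j) \<omega>))\<^sup>2 \<partial>M)"
    by (intro Bochner_Integration.integral_cong) (auto simp: eq)
  with A(2) bound int show ?thesis by linarith
qed



lemma sq_ratio: "0 < y \<Longrightarrow> y \<le> (x::real) \<Longrightarrow> (x\<^sup>2 - y\<^sup>2) / x \<le> 2 * (x - y)"
proof -
  assume y: "0 < y" and xy: "y \<le> x"
  then have x: "x > 0" by simp
  have "(x\<^sup>2 - y\<^sup>2) = (x - y) * (x + y)" by (simp add: power2_eq_square algebra_simps)
  also have "\<dots> \<le> (x - y) * (2 * x)" using xy by (intro mult_left_mono) auto
  finally have "(x\<^sup>2 - y\<^sup>2) \<le> (x - y) * (2 * x)" .
  then have "(x\<^sup>2 - y\<^sup>2) / x \<le> (x - y) * (2 * x) / x" by (rule divide_right_mono) (use x in auto)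
  also have "\<dots> = 2 * (x - y)" using x by simp
  finally show ?thesis .
qed

lemma second_moment:
  fixes f e :: "real \<Rightarrow> real"
  assumes fbm: "fBm M H B" and T: "T > 0" and H: "H > 0"
    and fe: "\<And>x. 0 \<le> x \<Longrightarrow> x \<le> T \<Longrightarrow> f x = (e x)\<^sup>2"
    and emono: "\<And>x y. 0 \<le> x \<Longrightarrow> x \<le> y \<Longrightarrow> y \<le> T \<Longrightarrow> e x \<le> e y"
    and epos: "\<And>x. 0 \<le> x \<Longrightarrow> x \<le> T \<Longrightarrow> e x > 0"
    and eT: "e T = 1"
    and Kb: "\<And>x. 0 \<le> x \<Longrightarrow> x \<le> T \<Longrightarrow> (T - x) powr (2*H) \<le> K / e x"
    and K: "K \<ge> 0"
    and k: "k \<ge> 1"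
  shows "integrable M (\<lambda>\<omega>. (riemann_sum B f T k \<omega>)\<^sup>2) \<and> (\<integral>\<omega>. (riemann_sum B f T k \<omega>)\<^sup>2 \<partial>M) \<le> 2 * K"
proof -
  define t where "t = grid T k"
  define W where "W j = (if j = 0 then f 0 else f (t j) - f (t (j - 1)))" for j
  define J where "J = {..<Suc k}"
  have t0: "t 0 = 0" unfolding t_def grid_def by simp
  have tk: "t k = T" unfolding t_def using grid_last[OF k] .
  have tin: "\<And>j. j \<le> k \<Longrightarrow> 0 \<le> t j \<and> t j \<le> T" unfolding t_def using T grid_nonneg grid_le by auto
  have tmono: "\<And>i. t i \<le> t (Suc i)" unfolding t_def grid_def using T by (simp add: divide_right_mono)
  have eq: "riemann_sum B f T k \<omega> = (\<Sum>j\<in>J. W j * (B T \<omega> - B (t j) \<omega>))" if \<omega>: "\<omega> \<in> space M" for \<omega>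
  proof -
    have B0: "B 0 \<omega> = 0" using fbm \<omega> unfolding fBm_def by auto
    show ?thesis unfolding riemann_rep[OF fbm k \<omega>] J_def sum.lessThan_Suc_shift
      by (simp add: W_def B0 t_def grid_def)
  qed
  have Wnn: "\<And>j. j \<in> J \<Longrightarrow> W j \<ge> 0"
  proof -
    fix j assume "j \<in> J"
    then have j: "j \<le> k" unfolding J_def by simp
    show "W j \<ge> 0"
    proof (cases j)
      case 0 then show ?thesis unfolding W_def using fe[of 0] T by simp
    next
      case (Suc i)
      have a: "0 \<le> t i" "t (Suc i) \<le> T" "t i \<le> T" "0 \<le> t (Suc i)" using tin[of i] tin[of "Suc i"] Suc j by auto
      have "e (t i) \<le> e (t (Suc i))" using emono a tmono by blast
      moreover have "e (t i) > 0" using epos a by blast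
      ultimately have "(e (t i))\<^sup>2 \<le> (e (t (Suc i)))\<^sup>2" by (intro power_mono) auto
      then show ?thesis unfolding W_def Suc using fe a by simp
    qed
  qed
  have finJ: "finite J" unfolding J_def by simp
  have wpq: "\<And>j. j \<in> J \<Longrightarrow> W j \<ge> 0 \<and> t j \<ge> 0 \<and> T \<ge> 0"
    using Wnn tin T unfolding J_def by auto
  from lemmaA[of M H B J W t "\<lambda>_. T", OF fbm finJ wpq] have A:
    "integrable M (\<lambda>\<omega>. (\<Sum>j\<in>J. W j * (B T \<omega> - B (t j) \<omega>))\<^sup>2)"
    "(\<integral>\<omega>. (\<Sum>j\<in>J. W j * (B T \<omega> - B (t j) \<omega>))\<^sup>2 \<partial>M) \<le> (\<Sum>j\<in>J. W j) * (\<Sum>j\<in>J. W j * \<bar>T - t j\<bar> powr (2*H))"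
    by auto
  have Wsum: "(\<Sum>j\<in>J. W j) = 1"
  proof -
    have "(\<Sum>j\<in>J. W j) = f 0 + (\<Sum>i<k. f (t (Suc i)) - f (t i))"
      unfolding J_def sum.lessThan_Suc_shift by (simp add: W_def)
    also have "\<dots> = f (t k)" using sum_lessThan_telescope[of "\<lambda>i. f (t i)" k] t0 by simp
    also have "\<dots> = 1" using tk fe[of T] eT T by simp
    finally show ?thesis .
  qed
  have s2: "(\<Sum>j\<in>J. W j * \<bar>T - t j\<bar> powr (2*H)) \<le> K * (\<Sum>j\<in>J. W j / e (t j))"
  proof -
    have "(\<Sum>j\<in>J. W j * \<bar>T - t j\<bar> powr (2*H)) \<le> (\<Sum>j\<in>J. W j * (K / e (t j)))"
    proof (intro sum_mono mult_left_mono)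
      fix j assume j: "j \<in> J"
      then have "0 \<le> t j" "t j \<le> T" using tin unfolding J_def by auto
      then show "\<bar>T - t j\<bar> powr (2*H) \<le> K / e (t j)" using Kb by simp
      show "W j \<ge> 0" using Wnn j .
    qed
    also have "\<dots> = K * (\<Sum>j\<in>J. W j / e (t j))" by (simp add: sum_distrib_left mult.commute)
    finally show ?thesis .
  qed
  have s3: "(\<Sum>j\<in>J. W j / e (t j)) \<le> 2"
  proof -
    have e0: "e (t 0) > 0" using epos tin[of 0] by auto
    have "(\<Sum>j\<in>J. W j / e (t j)) = W 0 / e (t 0) + (\<Sum>i<k. W (Suc i) / e (t (Suc i)))"
      unfolding J_def sum.lessThan_Suc_shift by simp
    also have "\<dots> \<le> e (t 0) + (\<Sum>i<k. 2 * (e (t (Suc i)) - e (t i)))"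
    proof (intro add_mono sum_mono)
      have "W 0 = (e (t 0))\<^sup>2" unfolding W_def using fe[of 0] T t0 by simp
      then show "W 0 / e (t 0) \<le> e (t 0)" using e0 by (simp add: power2_eq_square)
      fix i assume "i \<in> {..<k}"
      then have a: "0 \<le> t i" "t (Suc i) \<le> T" "t i \<le> T" "0 \<le> t (Suc i)" using tin[of i] tin[of "Suc i"] by auto
      have W: "W (Suc i) = (e (t (Suc i)))\<^sup>2 - (e (t i))\<^sup>2" unfolding W_def using fe a by simp
      show "W (Suc i) / e (t (Suc i)) \<le> 2 * (e (t (Suc i)) - e (t i))"
        unfolding W by (rule sq_ratio) (use epos emono a tmono in auto)
    qed
    also have "\<dots> = e (t 0) + 2 * (e (t k) - e (t 0))"
    proof -
      have "(\<Sum>i<k. 2 * (e (t (Suc i)) - e (t i))) = 2 * (\<Sum>i<k. e (t (Suc i)) - e (t i))"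
        by (rule sum_distrib_left[symmetric])
      then show ?thesis using sum_lessThan_telescope[of "\<lambda>i. e (t i)" k] by simp
    qed
    also have "\<dots> \<le> 2" using tk eT e0 by simp
    finally show ?thesis .
  qed
  have bound: "(\<Sum>j\<in>J. W j) * (\<Sum>j\<in>J. W j * \<bar>T - t j\<bar> powr (2*H)) \<le> 2 * K"
    unfolding Wsum using s2 mult_left_mono[OF s3 K] by simp
  have eq2: "\<And>\<omega>. \<omega> \<in> space M \<Longrightarrow> (riemann_sum B f T k \<omega>)\<^sup>2 = (\<Sum>j\<in>J. W j * (B T \<omega> - B (t j) \<omega>))\<^sup>2"
    using eq by simp
  have int: "integrable M (\<lambda>\<omega>. (riemann_sum B f T k \<omega>)\<^sup>2)"
    using A(1) Bochner_Integration.integrable_cong[OF refl eq2, of M "\<lambda>x. x"] by simp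
  have "(\<integral>\<omega>. (riemann_sum B f T k \<omega>)\<^sup>2 \<partial>M) = (\<integral>\<omega>. (\<Sum>j\<in>J. W j * (B T \<omega> - B (t j) \<omega>))\<^sup>2 \<partial>M)"
    by (intro Bochner_Integration.integral_cong) (auto simp: eq2)
  with A(2) bound int show ?thesis by linarith
qed



lemma a_integrable:
  fixes a :: "real \<Rightarrow> real"
  assumes a0: "0 < a0" and a_bounds: "\<forall>t\<in>{0..T}. a0 \<le> a t \<and> a t \<le> a1"
    and a_meas: "set_borel_measurable lborel {0..T} a" and \<tau>: "0 \<le> \<tau>"
  shows "set_integrable lborel {\<tau>..T} a"
proof -
  have m: "(\<lambda>x. indicator {0..T} x * a x) \<in> borel_measurable lborel"
    using a_meas unfolding set_borel_measurable_def by simp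
  have "integrable lborel (\<lambda>x. indicator {\<tau>..T} x *\<^sub>R (indicator {0..T} x * a x))"
  proof (rule integrableI_bounded_set_indicator[OF _ m, where B=a1])
    show "AE x in lborel. x \<in> {\<tau>..T} \<longrightarrow> norm (indicator {0..T} x * a x) \<le> a1"
    proof (intro AE_I2 impI)
      fix x assume x: "x \<in> {\<tau>..T}"
      then have "x \<in> {0..T}" using \<tau> by auto
      with a_bounds have "a0 \<le> a x \<and> a x \<le> a1" by blast
      with a0 x \<open>x \<in> {0..T}\<close> show "norm (indicator {0..T} x * a x) \<le> a1" by (auto simp: indicator_def)
    qed
  qed (auto simp: emeasure_lborel_Icc_eq)
  moreover have "(\<lambda>x. indicator {\<tau>..T} x *\<^sub>R (indicator {0..T} x * a x)) = (\<lambda>x. indicator {\<tau>..T} x *\<^sub>R a x)"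
    using \<tau> by (auto simp: indicator_def)
  ultimately show ?thesis unfolding set_integrable_def by metis
qed

lemma phi_lower:
  fixes a :: "real \<Rightarrow> real"
  assumes a0: "0 < a0" and a_bounds: "\<forall>t\<in>{0..T}. a0 \<le> a t \<and> a t \<le> a1"
    and a_meas: "set_borel_measurable lborel {0..T} a" and \<tau>: "0 \<le> \<tau>" "\<tau> \<le> T"
  shows "a0 * (T - \<tau>) \<le> (\<integral>s\<in>{\<tau>..T}. a s \<partial>lborel)"
proof -
  have "a0 * (T - \<tau>) = (\<integral>s\<in>{\<tau>..T}. a0 \<partial>lborel)"
    using \<tau> by (subst set_integral_const) auto
  also have "\<dots> \<le> (\<integral>s\<in>{\<tau>..T}. a s \<partial>lborel)"
  proof (rule set_integral_mono)
    show "set_integrable lborel {\<tau>..T} (\<lambda>_. a0)"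
      by (rule borel_integrable_atLeastAtMost') (rule continuous_on_const)
    show "set_integrable lborel {\<tau>..T} a" by (rule a_integrable[OF a0 a_bounds a_meas \<tau>(1)])
    show "\<And>x. x \<in> {\<tau>..T} \<Longrightarrow> a0 \<le> a x" using a_bounds \<tau> by auto
  qed
  finally show ?thesis .
qed

lemma phi_mono:
  fixes a :: "real \<Rightarrow> real"
  assumes a0: "0 < a0" and a_bounds: "\<forall>t\<in>{0..T}. a0 \<le> a t \<and> a t \<le> a1"
    and a_meas: "set_borel_measurable lborel {0..T} a" and xy: "0 \<le> x" "x \<le> y"
  shows "(\<integral>s\<in>{y..T}. a s \<partial>lborel) \<le> (\<integral>s\<in>{x..T}. a s \<partial>lborel)"
proof -
  have iy: "integrable lborel (\<lambda>s. indicator {y..T} s *\<^sub>R a s)"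
    using a_integrable[OF a0 a_bounds a_meas, of y] xy unfolding set_integrable_def by simp
  have ix: "integrable lborel (\<lambda>s. indicator {x..T} s *\<^sub>R a s)"
    using a_integrable[OF a0 a_bounds a_meas, of x] xy unfolding set_integrable_def by simp
  show ?thesis unfolding set_lebesgue_integral_def
  proof (rule integral_mono[OF iy ix])
    fix s
    show "indicator {y..T} s *\<^sub>R a s \<le> indicator {x..T} s *\<^sub>R a s"
    proof (cases "s \<in> {x..T}")
      case True
      then have "s \<in> {0..T}" using xy by auto
      with a_bounds have "a0 \<le> a s" by blast
      with a0 True xy show ?thesis by (auto simp: indicator_def)
    next
      case False
      then show ?thesis using xy by (auto simp: indicator_def)
    qed
  qed
qed

lemma phi_T: "(\<integral>s\<in>{T..T::real}. a s \<partial>lborel) = (0::real)"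
  unfolding set_lebesgue_integral_def
  by (rule integral_eq_zero_AE) (rule AE_mp[OF AE_lborel_singleton[of T]], rule AE_I2, auto simp: indicator_def dest: antisym)

lemma powr_exp_bound:
  fixes y H c :: real
  assumes y: "y \<ge> 0" and H: "0 < H" "H < 1" and c: "c > 0"
  shows "y powr (2*H) \<le> (1 + 16 / c\<^sup>2) * exp (c * y / 2)"
proof -
  have p1: "y powr (2*H) \<le> 1 + y\<^sup>2"
  proof (cases "y \<le> 1")
    case True
    then have "y powr (2*H) \<le> 1" using y H by (intro powr_le1) auto
    then show ?thesis by (smt (verit) zero_le_power2)
  next
    case False
    then have "y powr (2*H) \<le> y powr 2" using H by (intro powr_mono) auto
    then show ?thesis using y by (simp add: powr_numeral)
  qed
  have e1: "1 + c * y / 4 \<le> exp (c * y / 4)" by (rule exp_ge_add_one_self)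
  have "c * y / 4 \<le> exp (c * y / 4)" using e1 by linarith
  then have "(c * y / 4)\<^sup>2 \<le> (exp (c * y / 4))\<^sup>2" using c y by (intro power_mono) auto
  also have "\<dots> = exp (c * y / 2)" by (simp add: power2_eq_square flip: exp_add)
  finally have "c\<^sup>2 * y\<^sup>2 / 16 \<le> exp (c * y / 2)" by (simp add: power_divide power_mult_distrib)
  then have y2: "y\<^sup>2 \<le> 16 / c\<^sup>2 * exp (c * y / 2)" using c by (simp add: field_simps)
  have "1 \<le> exp (c * y / 2)" using c y by simp
  moreover have "(1 + 16 / c\<^sup>2) * exp (c * y / 2) = exp (c * y / 2) + 16 / c\<^sup>2 * exp (c * y / 2)"
    by (simp add: algebra_simps)
  ultimately have "1 + y\<^sup>2 \<le> (1 + 16 / c\<^sup>2) * exp (c * y / 2)" using y2 by linarith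
  with p1 show ?thesis by linarith
qed



lemma exp_integral_bound:
  fixes c T Kh :: real
  assumes c: "c > 0" and T: "T > 0" and Kh: "Kh \<ge> 0"
  shows "set_integrable lborel {0..T} (\<lambda>x. Kh * exp (- c * (T - x)))"
    and "(\<integral>x\<in>{0..T}. Kh * exp (- c * (T - x)) \<partial>lborel) \<le> Kh / c"
proof -
  have cont: "continuous_on {0..T} (\<lambda>x. Kh * exp (- c * (T - x)))"
    by (intro continuous_intros)
  show "set_integrable lborel {0..T} (\<lambda>x. Kh * exp (- c * (T - x)))"
    by (rule borel_integrable_atLeastAtMost'[OF cont])
  define G where "G x = Kh * exp (- c * (T - x)) / c" for x
  have d: "(G has_vector_derivative Kh * exp (- c * (T - x))) (at x within {min 0 T..max 0 T})" for x
  proof -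
    have "(G has_real_derivative Kh * exp (- c * (T - x))) (at x)"
      unfolding G_def using c by (auto intro!: derivative_eq_intros simp: field_simps)
    then show ?thesis
      by (simp add: has_real_derivative_iff_has_vector_derivative has_vector_derivative_at_within)
  qed
  have "(LBINT x=ereal 0..ereal T. Kh * exp (- c * (T - x))) = G T - G 0"
    by (rule interval_integral_FTC_finite) (use cont T d in auto)
  then have "(\<integral>x\<in>{0..T}. Kh * exp (- c * (T - x)) \<partial>lborel) = G T - G 0"
    using T by (simp add: interval_integral_Icc)
  also have "\<dots> \<le> Kh / c" unfolding G_def using c Kh by (simp add: divide_right_mono diff_divide_distrib)
  finally show "(\<integral>x\<in>{0..T}. Kh * exp (- c * (T - x)) \<partial>lborel) \<le> Kh / c" .
qed

lemma first_bound:
  fixes h f :: "real \<Rightarrow> real"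
  assumes c: "c > 0" and T: "T > 0" and Kh: "Kh \<ge> 0"
    and hb: "AE \<tau> in lborel. \<tau> \<in> {0..T} \<longrightarrow> \<bar>h \<tau>\<bar> \<le> Kh"
    and fb: "\<And>\<tau>. 0 \<le> \<tau> \<Longrightarrow> \<tau> \<le> T \<Longrightarrow> 0 \<le> f \<tau> \<and> f \<tau> \<le> exp (- c * (T - \<tau>))"
  shows "\<bar>\<integral>\<tau>\<in>{0..T}. h \<tau> * f \<tau> \<partial>lborel\<bar> \<le> Kh / c"
proof -
  note E = exp_integral_bound[OF c T Kh]
  have "\<bar>\<integral>\<tau>\<in>{0..T}. h \<tau> * f \<tau> \<partial>lborel\<bar> \<le> (\<integral>\<tau>. norm (indicator {0..T} \<tau> *\<^sub>R (h \<tau> * f \<tau>)) \<partial>lborel)"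
    unfolding set_lebesgue_integral_def using integral_norm_bound by (metis real_norm_def)
  also have "\<dots> \<le> (\<integral>\<tau>. indicator {0..T} \<tau> *\<^sub>R (Kh * exp (- c * (T - \<tau>))) \<partial>lborel)"
  proof (rule integral_mono_AE')
    show "integrable lborel (\<lambda>\<tau>. indicator {0..T} \<tau> *\<^sub>R (Kh * exp (- c * (T - \<tau>))))"
      using E(1) unfolding set_integrable_def .
    show "AE \<tau> in lborel. 0 \<le> indicator {0..T} \<tau> *\<^sub>R (Kh * exp (- c * (T - \<tau>)))"
      using Kh by (intro AE_I2) simp
    show "AE \<tau> in lborel. norm (indicator {0..T} \<tau> *\<^sub>R (h \<tau> * f \<tau>)) \<le> indicator {0..T} \<tau> *\<^sub>R (Kh * exp (- c * (T - \<tau>)))"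
      using hb
    proof eventually_elim
      case (elim \<tau>)
      show ?case
      proof (cases "\<tau> \<in> {0..T}")
        case True
        then have h: "\<bar>h \<tau>\<bar> \<le> Kh" using elim by blast
        have f: "0 \<le> f \<tau>" "f \<tau> \<le> exp (- c * (T - \<tau>))" using fb True by auto
        have "\<bar>h \<tau> * f \<tau>\<bar> \<le> Kh * exp (- c * (T - \<tau>))"
          unfolding abs_mult using h f by (intro mult_mono) auto
        then show ?thesis using True by simp
      qed simp
    qed
  qed
  also have "\<dots> = (\<integral>x\<in>{0..T}. Kh * exp (- c * (T - x)) \<partial>lborel)"
    unfolding set_lebesgue_integral_def ..
  also have "\<dots> \<le> Kh / c" by (rule E(2))
  finally show ?thesis .
qed



lemma sq_tri: "((x::real) - y)\<^sup>2 \<le> 2 * (x - z)\<^sup>2 + 2 * (y - z)\<^sup>2"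
proof -
  have "0 \<le> ((x - z) + (y - z))\<^sup>2" by simp
  then show ?thesis by (simp add: power2_eq_square algebra_simps)
qed

theorem theorem4p2:
  fixes R0 T a0 a1 H :: real
    and a h :: "real \<Rightarrow> real"
    and M :: "'a measure"
    and B :: "real \<Rightarrow> 'a \<Rightarrow> real"
  assumes R0: "R0 > 0" and T: "T > 0"
    and a0: "0 < a0" and a01: "a0 \<le> a1"
    and a_bounds: "\<forall>t\<in>{0..T}. a0 \<le> a t \<and> a t \<le> a1"
    and a_meas: "set_borel_measurable lborel {0..T} a"
    and H: "0 < H" "H < 1"
    and fbm: "fBm M H B"
    and h_meas: "set_borel_measurable lborel {0..T} h"
    and h_Linf: "\<exists>K. AE \<tau> in lborel. \<tau> \<in> {0..T} \<longrightarrow> \<bar>h \<tau>\<bar> \<le> K"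
    and h_nonneg: "AE \<tau> in lborel. \<tau> \<in> {0..T} \<longrightarrow> h \<tau> \<ge> 0"
    and h_supp: "emeasure lborel {\<tau>\<in>{0..T}. h \<tau> \<noteq> 0} > 0"
  shows "\<exists>C>0. \<forall>n\<ge>1.
     \<bar>\<integral>\<tau>\<in>{0..T}. h \<tau> * exp (- eigval R0 n * (\<integral>s\<in>{\<tau>..T}. a s \<partial>lborel)) \<partial>lborel\<bar>
        \<le> C / eigval R0 n \<and>
     (\<exists>X. is_wiener_integral M B (\<lambda>\<tau>. exp (- eigval R0 n * (\<integral>s\<in>{\<tau>..T}. a s \<partial>lborel))) T X \<and>
          (\<integral>\<omega>. (X \<omega>)\<^sup>2 \<partial>M) \<le> C / eigval R0 n powr (min (2*H) 1))"
proof -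
  obtain K0 where K0: "AE \<tau> in lborel. \<tau> \<in> {0..T} \<longrightarrow> \<bar>h \<tau>\<bar> \<le> K0" using h_Linf by blast
  define Kh where "Kh = max K0 0"
  have Kh: "Kh \<ge> 0" unfolding Kh_def by simp
  have hb: "AE \<tau> in lborel. \<tau> \<in> {0..T} \<longrightarrow> \<bar>h \<tau>\<bar> \<le> Kh"
    using K0 by eventually_elim (auto simp: Kh_def)
  define C0 where "C0 = 1 + 16 / a0\<^sup>2"
  have C0: "C0 > 0" unfolding C0_def by (simp add: add_pos_nonneg)
  define lam1 where "lam1 = (pi / R0)\<^sup>2"
  have lam1: "lam1 > 0" unfolding lam1_def using R0 by simp
  define M1 where "M1 = max 1 (lam1 powr (1 - 2*H))"
  have M1: "M1 \<ge> 1" unfolding M1_def by simp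
  define C where "C = max (Kh / a0) (4 * C0 * M1) + 1"
  have Cpos: "C > 0" unfolding C_def using Kh a0 C0 M1 by (smt (verit) divide_nonneg_pos max.cobounded1)
  have Cge1: "Kh / a0 \<le> C" and Cge2: "4 * C0 * M1 \<le> C" unfolding C_def by auto
  have Bm: "\<And>t. t \<ge> 0 \<Longrightarrow> B t \<in> borel_measurable M" using fbm unfolding fBm_def by auto
  have "\<forall>n\<ge>1.
     \<bar>\<integral>\<tau>\<in>{0..T}. h \<tau> * exp (- eigval R0 n * (\<integral>s\<in>{\<tau>..T}. a s \<partial>lborel)) \<partial>lborel\<bar>
        \<le> C / eigval R0 n \<and>
     (\<exists>X. is_wiener_integral M B (\<lambda>\<tau>. exp (- eigval R0 n * (\<integral>s\<in>{\<tau>..T}. a s \<partial>lborel))) T X \<and>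
          (\<integral>\<omega>. (X \<omega>)\<^sup>2 \<partial>M) \<le> C / eigval R0 n powr (min (2*H) 1))"
  proof (intro allI impI)
    fix n :: nat assume n: "n \<ge> 1"
    define lam where "lam = eigval R0 n"
    have lam1le: "lam1 \<le> lam"
    proof -
      have "pi / R0 \<le> real n * pi / R0" using n R0 by (simp add: divide_right_mono)
      then show ?thesis unfolding lam_def lam1_def eigval_def using R0
        by (intro power_mono) auto
    qed
    have lam: "lam > 0" using lam1 lam1le by linarith
    define \<phi> where "\<phi> \<tau> = (\<integral>s\<in>{\<tau>..T}. a s \<partial>lborel)" for \<tau>
    define f where "f \<tau> = exp (- lam * \<phi> \<tau>)" for \<tau>
    have \<phi>low: "\<And>\<tau>. 0 \<le> \<tau> \<Longrightarrow> \<tau> \<le> T \<Longrightarrow> a0 * (T - \<tau>) \<le> \<phi> \<tau>"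
      unfolding \<phi>_def by (rule phi_lower[OF a0 a_bounds a_meas])
    have \<phi>mono: "\<And>x y. 0 \<le> x \<Longrightarrow> x \<le> y \<Longrightarrow> \<phi> y \<le> \<phi> x"
      unfolding \<phi>_def by (rule phi_mono[OF a0 a_bounds a_meas])
    have \<phi>T: "\<phi> T = 0" unfolding \<phi>_def by (rule phi_T)
    have fb: "\<And>\<tau>. 0 \<le> \<tau> \<Longrightarrow> \<tau> \<le> T \<Longrightarrow> 0 \<le> f \<tau> \<and> f \<tau> \<le> exp (- (lam * a0) * (T - \<tau>))"
    proof -
      fix \<tau> :: real assume t: "0 \<le> \<tau>" "\<tau> \<le> T"
      have "lam * (a0 * (T - \<tau>)) \<le> lam * \<phi> \<tau>" using \<phi>low[OF t] lam by (intro mult_left_mono) auto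
      then show "0 \<le> f \<tau> \<and> f \<tau> \<le> exp (- (lam * a0) * (T - \<tau>))" unfolding f_def by simp
    qed
    have part1: "\<bar>\<integral>\<tau>\<in>{0..T}. h \<tau> * f \<tau> \<partial>lborel\<bar> \<le> C / lam"
    proof -
      have "\<bar>\<integral>\<tau>\<in>{0..T}. h \<tau> * f \<tau> \<partial>lborel\<bar> \<le> Kh / (lam * a0)"
        by (rule first_bound[OF _ T Kh hb fb]) (use lam a0 in auto)
      also have "\<dots> = (Kh / a0) / lam" by simp
      also have "\<dots> \<le> C / lam" using Cge1 lam by (intro divide_right_mono) auto
      finally show ?thesis .
    qed
    define e where "e \<tau> = exp (- lam * \<phi> \<tau> / 2)" for \<tau>
    define K where "K = C0 / lam powr (2*H)"
    have K: "K \<ge> 0" unfolding K_def using C0 by simp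
    have fe: "\<And>x. 0 \<le> x \<Longrightarrow> x \<le> T \<Longrightarrow> f x = (e x)\<^sup>2"
      unfolding f_def e_def by (simp add: power2_eq_square flip: exp_add)
    have emono: "\<And>x y. 0 \<le> x \<Longrightarrow> x \<le> y \<Longrightarrow> y \<le> T \<Longrightarrow> e x \<le> e y"
    proof -
      fix x y :: real assume "0 \<le> x" "x \<le> y" "y \<le> T"
      then have "lam * \<phi> y \<le> lam * \<phi> x" using \<phi>mono lam by (intro mult_left_mono) auto
      then show "e x \<le> e y" unfolding e_def by simp
    qed
    have epos: "\<And>x. 0 \<le> x \<Longrightarrow> x \<le> T \<Longrightarrow> e x > 0" unfolding e_def by simp
    have eT: "e T = 1" unfolding e_def \<phi>T by simp
    have Kb: "\<And>x. 0 \<le> x \<Longrightarrow> x \<le> T \<Longrightarrow> (T - x) powr (2*H) \<le> K / e x"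
    proof -
      fix x :: real assume x: "0 \<le> x" "x \<le> T"
      define y where "y = lam * (T - x)"
      have y: "y \<ge> 0" unfolding y_def using lam x by simp
      have "(T - x) powr (2*H) = (y / lam) powr (2*H)" unfolding y_def using lam by simp
      also have "\<dots> = y powr (2*H) / lam powr (2*H)" using y lam by (simp add: powr_divide)
      also have "\<dots> \<le> C0 * exp (a0 * y / 2) / lam powr (2*H)"
        unfolding C0_def by (intro divide_right_mono powr_exp_bound y H a0) auto
      also have "\<dots> \<le> C0 * exp (lam * \<phi> x / 2) / lam powr (2*H)"
      proof -
        have "a0 * y = lam * (a0 * (T - x))" unfolding y_def by simp
        also have "\<dots> \<le> lam * \<phi> x" using \<phi>low[OF x] lam by (intro mult_left_mono) auto
        finally show ?thesis using C0 by (intro divide_right_mono mult_left_mono) auto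
      qed
      also have "\<dots> = K / e x" unfolding K_def e_def by (simp add: exp_minus field_simps)
      finally show "(T - x) powr (2*H) \<le> K / e x" .
    qed
    have fmono: "\<And>x y. 0 \<le> x \<Longrightarrow> x \<le> y \<Longrightarrow> y \<le> T \<Longrightarrow> f x \<le> f y"
    proof -
      fix x y :: real assume "0 \<le> x" "x \<le> y" "y \<le> T"
      then have "lam * \<phi> y \<le> lam * \<phi> x" using \<phi>mono lam by (intro mult_left_mono) auto
      then show "f x \<le> f y" unfolding f_def by simp
    qed
    have fT: "f T = 1" unfolding f_def \<phi>T by simp
    have f0: "f 0 \<ge> 0" unfolding f_def by simp
    define S where "S k = riemann_sum B f T k" for k
    have Sm: "\<And>k. S k \<in> borel_measurable M"
      unfolding S_def riemann_sum_def using T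
      by (intro borel_measurable_sum borel_measurable_times borel_measurable_const borel_measurable_diff Bm) auto
    have SM: "\<And>k. k \<ge> 1 \<Longrightarrow> integrable M (\<lambda>\<omega>. (S k \<omega>)\<^sup>2) \<and> (\<integral>\<omega>. (S k \<omega>)\<^sup>2 \<partial>M) \<le> 2 * K"
      unfolding S_def by (rule second_moment[OF fbm T H(1) fe emono epos eT Kb K])
    have cst: "\<And>k m. k \<ge> 1 \<Longrightarrow> m \<ge> 1 \<Longrightarrow> integrable M (\<lambda>\<omega>. (S k \<omega> - S (k*m) \<omega>)\<^sup>2) \<and>
        (\<integral>\<omega>. (S k \<omega> - S (k*m) \<omega>)\<^sup>2 \<partial>M) \<le> (T / real k) powr (2*H)"
      unfolding S_def by (rule cauchy_step[OF fbm T H(1) fmono fT f0])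
    define \<delta> where "\<delta> k = 2 * (T / real k) powr (2*H)" for k :: nat
    have cauchy: "integrable M (\<lambda>\<omega>. (S p \<omega> - S q \<omega>)\<^sup>2) \<and> (\<integral>\<omega>. (S p \<omega> - S q \<omega>)\<^sup>2 \<partial>M) \<le> \<delta> p + \<delta> q"
      if pq: "p \<ge> 1" "q \<ge> 1" for p q
    proof -
      note c1 = cst[OF pq(1) pq(2)] and c2 = cst[OF pq(2) pq(1)]
      have qp: "q * p = p * q" by simp
      define U where "U \<omega> = 2 * (S p \<omega> - S (p*q) \<omega>)\<^sup>2 + 2 * (S q \<omega> - S (p*q) \<omega>)\<^sup>2" for \<omega>
      have Ui: "integrable M U" unfolding U_def using c1 c2 qp by auto
      have pw: "\<And>\<omega>. (S p \<omega> - S q \<omega>)\<^sup>2 \<le> U \<omega>" unfolding U_def by (rule sq_tri)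
      have m: "(\<lambda>\<omega>. (S p \<omega> - S q \<omega>)\<^sup>2) \<in> borel_measurable M" using Sm by measurable
      have int: "integrable M (\<lambda>\<omega>. (S p \<omega> - S q \<omega>)\<^sup>2)"
        by (rule Bochner_Integration.integrable_bound[OF Ui m]) (rule AE_I2, simp, rule order_trans[OF pw abs_ge_self])
      have "(\<integral>\<omega>. (S p \<omega> - S q \<omega>)\<^sup>2 \<partial>M) \<le> (\<integral>\<omega>. U \<omega> \<partial>M)" by (rule integral_mono[OF int Ui pw])
      also have "\<dots> = 2 * (\<integral>\<omega>. (S p \<omega> - S (p*q) \<omega>)\<^sup>2 \<partial>M) + 2 * (\<integral>\<omega>. (S q \<omega> - S (p*q) \<omega>)\<^sup>2 \<partial>M)"
        unfolding U_def using c1 c2 qp by simp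
      also have "\<dots> \<le> \<delta> p + \<delta> q" unfolding \<delta>_def using c1 c2[unfolded qp] by linarith
      finally show ?thesis using int by blast
    qed
    have dlim: "\<delta> \<longlonglongrightarrow> 0"
    proof -
      have "(\<lambda>k. (T / real k) powr (2*H)) \<longlonglongrightarrow> 0"
        by (rule tendsto_zero_powrI[OF lim_const_over_n tendsto_const]) (use T H in auto)
      then have "(\<lambda>k. 2 * (T / real k) powr (2*H)) \<longlonglongrightarrow> 2 * 0" by (intro tendsto_intros)
      then show ?thesis unfolding \<delta>_def by simp
    qed
    obtain X where Xm: "X \<in> borel_measurable M" and XL: "\<And>k. k \<ge> 1 \<Longrightarrow> integrable M (\<lambda>\<omega>. (S k \<omega> - X \<omega>)\<^sup>2) \<and>
            (\<integral>\<omega>. (S k \<omega> - X \<omega>)\<^sup>2 \<partial>M) \<le> \<delta> k"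
      using L2_complete[OF Sm cauchy dlim] by blast
    have Xbound: "integrable M (\<lambda>\<omega>. (X \<omega>)\<^sup>2) \<and> (\<integral>\<omega>. (X \<omega>)\<^sup>2 \<partial>M) \<le> 4 * K + 2 * \<delta> k" if k: "k \<ge> 1" for k
    proof -
      define U where "U \<omega> = 2 * (S k \<omega> - X \<omega>)\<^sup>2 + 2 * (S k \<omega> - S k \<omega>)\<^sup>2 + 2 * (S k \<omega>)\<^sup>2" for \<omega>
      have Ui: "integrable M U" unfolding U_def using XL[OF k] SM[OF k] by auto
      have pw: "(X \<omega>)\<^sup>2 \<le> U \<omega>" for \<omega>
      proof -
        have "(0 - X \<omega>)\<^sup>2 \<le> 2 * (0 - S k \<omega>)\<^sup>2 + 2 * (X \<omega> - S k \<omega>)\<^sup>2" by (rule sq_tri)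
        then show ?thesis unfolding U_def by (simp add: power2_commute[of "X \<omega>"])
      qed
      have m: "(\<lambda>\<omega>. (X \<omega>)\<^sup>2) \<in> borel_measurable M" using Xm by measurable
      have int: "integrable M (\<lambda>\<omega>. (X \<omega>)\<^sup>2)"
        by (rule Bochner_Integration.integrable_bound[OF Ui m]) (rule AE_I2, simp, rule order_trans[OF pw abs_ge_self])
      have "(\<integral>\<omega>. (X \<omega>)\<^sup>2 \<partial>M) \<le> (\<integral>\<omega>. U \<omega> \<partial>M)" by (rule integral_mono[OF int Ui pw])
      also have "\<dots> = 2 * (\<integral>\<omega>. (S k \<omega> - X \<omega>)\<^sup>2 \<partial>M) + 2 * (\<integral>\<omega>. (S k \<omega>)\<^sup>2 \<partial>M)"
        unfolding U_def using XL[OF k] SM[OF k] by simp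
      also have "\<dots> \<le> 4 * K + 2 * \<delta> k" using XL[OF k] SM[OF k] by linarith
      finally show ?thesis using int by blast
    qed
    have wi: "is_wiener_integral M B f T X"
      unfolding is_wiener_integral_def
    proof (intro conjI allI)
      show "X \<in> borel_measurable M" by (rule Xm)
      show "integrable M (\<lambda>\<omega>. (X \<omega>)\<^sup>2)" using Xbound[of 1] by simp
      fix k
      show "integrable M (\<lambda>\<omega>. (riemann_sum B f T k \<omega> - X \<omega>)\<^sup>2)"
      proof (cases "k = 0")
        case True then show ?thesis using Xbound[of 1] by (simp add: riemann_sum_def)
      next
        case False then show ?thesis using XL[of k] by (simp add: S_def)
      qed
    next
      show "(\<lambda>k. \<integral>\<omega>. (riemann_sum B f T k \<omega> - X \<omega>)\<^sup>2 \<partial>M) \<longlonglongrightarrow> 0"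
      proof (rule tendsto_sandwich[OF _ _ tendsto_const dlim])
        show "\<forall>\<^sub>F k in sequentially. 0 \<le> (\<integral>\<omega>. (riemann_sum B f T k \<omega> - X \<omega>)\<^sup>2 \<partial>M)"
          by (intro always_eventually allI integral_nonneg_AE AE_I2) simp
        show "\<forall>\<^sub>F k in sequentially. (\<integral>\<omega>. (riemann_sum B f T k \<omega> - X \<omega>)\<^sup>2 \<partial>M) \<le> \<delta> k"
          using XL unfolding S_def eventually_sequentially by blast
      qed
    qed
    have EX: "(\<integral>\<omega>. (X \<omega>)\<^sup>2 \<partial>M) \<le> 4 * K"
    proof -
      have "(\<lambda>k. 4 * K + 2 * \<delta> k) \<longlonglongrightarrow> 4 * K + 2 * 0" by (intro tendsto_intros dlim)
      then have l: "(\<lambda>k. 4 * K + 2 * \<delta> k) \<longlonglongrightarrow> 4 * K" by simp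
      have "\<exists>N. \<forall>k\<ge>N. (\<integral>\<omega>. (X \<omega>)\<^sup>2 \<partial>M) \<le> 4 * K + 2 * \<delta> k"
        using Xbound by (intro exI[of _ 1]) auto
      from LIMSEQ_le_const[OF l this] show ?thesis .
    qed
    have powbound: "1 / lam powr (2*H) \<le> M1 / lam powr (min (2*H) 1)"
    proof (cases "2*H \<le> 1")
      case True
      then show ?thesis using M1 lam by (simp add: divide_right_mono)
    next
      case False
      then have mn: "min (2*H) 1 = 1" by simp
      have "lam powr (1 - 2*H) \<le> lam1 powr (1 - 2*H)"
        by (rule powr_mono2') (use False lam1 lam1le in auto)
      also have "\<dots> \<le> M1" unfolding M1_def by simp
      finally have "lam powr (1 - 2*H) \<le> M1" .
      then have "lam / lam powr (2*H) \<le> M1" using lam by (simp add: powr_diff)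
      then show ?thesis unfolding mn using lam by (simp add: field_simps)
    qed
    have part2: "(\<integral>\<omega>. (X \<omega>)\<^sup>2 \<partial>M) \<le> C / lam powr (min (2*H) 1)"
    proof -
      have "4 * K = 4 * C0 * (1 / lam powr (2*H))" unfolding K_def by simp
      also have "\<dots> \<le> 4 * C0 * (M1 / lam powr (min (2*H) 1))"
        using powbound C0 by (intro mult_left_mono) auto
      also have "\<dots> = (4 * C0 * M1) / lam powr (min (2*H) 1)" by simp
      also have "\<dots> \<le> C / lam powr (min (2*H) 1)" using Cge2 lam by (intro divide_right_mono) auto
      finally show ?thesis using EX by linarith
    qed
    show "\<bar>\<integral>\<tau>\<in>{0..T}. h \<tau> * exp (- eigval R0 n * (\<integral>s\<in>{\<tau>..T}. a s \<partial>lborel)) \<partial>lborel\<bar>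
        \<le> C / eigval R0 n \<and>
     (\<exists>X. is_wiener_integral M B (\<lambda>\<tau>. exp (- eigval R0 n * (\<integral>s\<in>{\<tau>..T}. a s \<partial>lborel))) T X \<and>
          (\<integral>\<omega>. (X \<omega>)\<^sup>2 \<partial>M) \<le> C / eigval R0 n powr (min (2*H) 1))"
      using part1 part2 wi unfolding f_def \<phi>_def lam_def by blast
  qed
  then show ?thesis using Cpos by blast
qed

end
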